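(* Let $p$ be an odd prime and $\lambda=(\lambda_1,\dots,\lambda_r)$ a BG-partition, and let $k=k(\lambda)$. Then the partition $\mu=(\lambda_1,\lambda_2,\dots,\lambda_k)$ is $p$-regular.
   Context: For a partition $\lambda$ (weakly decreasing sequence of positive integers), $\lambda'$ is its conjugate and $\lambda$ is self-conjugate if $\lambda=\lambda'$. $k(\lambda)=\max\{i:\lambda_i\ge i\}$. The hook length at $(i,j)$ is $h_{ij}=\lambda_i+\lambda'_j-i-j+1$. A BG-partition is a self-conjugate partition with $p\nmid h_{ii}$ for all $1\le i\le k(\lambda)$. A partition is $p$-regular if no nonzero part appears $p$ or more times. *)

theory Defs
  imports "HOL-Computational_Algebra.Primes"
begin

text \<open>Partitions are lists of positive naturals in weakly decreasing order;
  parts are indexed from 1, and parts beyond the length are 0.\<close>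

definition is_partition :: "nat list \<Rightarrow> bool" where
  "is_partition l \<longleftrightarrow> sorted_wrt (\<ge>) l \<and> (\<forall>x\<in>set l. 0 < x)"

definition part :: "nat list \<Rightarrow> nat \<Rightarrow> nat" where
  "part l i = (if 1 \<le> i \<and> i \<le> length l then l ! (i - 1) else 0)"

definition conjugate :: "nat list \<Rightarrow> nat list" where
  "conjugate l = map (\<lambda>j. length (filter (\<lambda>x. j \<le> x) l)) [1..<Suc (fold max l 0)]"

definition self_conjugate :: "nat list \<Rightarrow> bool" where
  "self_conjugate l \<longleftrightarrow> conjugate l = l"

definition kpart :: "nat list \<Rightarrow> nat" where
  "kpart l = Max ({0} \<union> {i. 1 \<le> i \<and> i \<le> length l \<and> i \<le> part l i})"

definition hook :: "nat list \<Rightarrow> nat \<Rightarrow> nat \<Rightarrow> int" where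
  "hook l i j = int (part l i) + int (part (conjugate l) j) - int i - int j + 1"

definition BG_partition :: "nat \<Rightarrow> nat list \<Rightarrow> bool" where
  "BG_partition p l \<longleftrightarrow> is_partition l \<and> self_conjugate l \<and>
     (\<forall>i. 1 \<le> i \<and> i \<le> kpart l \<longrightarrow> \<not> int p dvd hook l i i)"

definition p_regular :: "nat \<Rightarrow> nat list \<Rightarrow> bool" where
  "p_regular p l \<longleftrightarrow> (\<forall>x. 0 < x \<longrightarrow> count_list l x < p)"

end

theory Submission
  imports Defs
begin

lemma kpart_le: "kpart l \<le> length l"
proof -
  let ?A = "{0} \<union> {i. 1 \<le> i \<and> i \<le> length l \<and> i \<le> part l i}"
  have sub: "?A \<subseteq> {..length l}" by auto
  have "finite ?A" by (rule finite_subset[OF sub]) simp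
  moreover have "?A \<noteq> {}" by blast
  ultimately have "Max ?A \<in> ?A" by (rule Max_in)
  then have "Max ?A \<le> length l" using sub by blast
  then show ?thesis unfolding kpart_def .
qed

lemma cl: "count_list xs x = length (filter ((=) x) xs)"
  by (induct xs) simp_all

lemma arith_choice:
  fixes p x a :: nat
  assumes "odd p" "p > 0"
  obtains r where "r < p" "int p dvd 2 * int x - 2 * int (a + r + 1) + 1"
proof -
  obtain m where pm: "p = 2 * m + 1" using assms(1) oddE by blast
  define t where "t = int x + int m - int a"
  define r where "r = nat (t mod int p)"
  have r0: "int r = t mod int p" using assms unfolding r_def by simp
  have "r < p" using assms unfolding r_def by (simp add: nat_less_iff)
  moreover have "int p dvd 2 * int x - 2 * int (a + r + 1) + 1"
  proof -
    define q where "q = t div int p"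
    have tq: "t = int p * q + int r" using r0 unfolding q_def by simp
    define P where "P = int p * q"
    have tq': "int x + int m - int a = P + int r" using tq unfolding t_def P_def by simp
    have ia: "int (a + r + 1) = int a + int r + 1" by simp
    have pm': "int p = 2 * int m + 1" using pm by simp
    have e: "2 * int x - 2 * int (a + r + 1) + 1 = 2 * P - int p"
      using tq' pm' by (simp add: algebra_simps)
    have "2 * int x - 2 * int (a + r + 1) + 1 = int p * (2 * q - 1)"
      unfolding e P_def by (simp add: algebra_simps)
    then show ?thesis by simp
  qed
  ultimately show ?thesis using that by blast
qed

theorem lemma3p18:
  fixes p :: nat and l :: "nat list"
  assumes "prime p" and "odd p" and "BG_partition p l"
  shows "p_regular p (take (kpart l) l)"
proof -
  have part: "is_partition l" and sc: "conjugate l = l"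
    and nd: "\<And>i. 1 \<le> i \<Longrightarrow> i \<le> kpart l \<Longrightarrow> \<not> int p dvd hook l i i"
    using assms(3) unfolding BG_partition_def self_conjugate_def by auto
  have srt: "sorted_wrt (\<ge>) l" using part unfolding is_partition_def by auto
  have pp: "p > 0" using assms(1) prime_gt_0_nat by blast
  define k where "k = kpart l"
  have kl: "k \<le> length l" unfolding k_def by (rule kpart_le)
  show ?thesis unfolding p_regular_def
  proof (intro allI impI, rule ccontr)
    fix x :: nat assume "0 < x" "\<not> count_list (take (kpart l) l) x < p"
    then have cp: "p \<le> count_list (take k l) x" unfolding k_def by simp
    define S where "S = {i. i < k \<and> l ! i = x}"
    have "count_list (take k l) x = card S"
    proof -
      have "count_list (take k l) x = length (filter ((=) x) (take k l))"
        by (rule cl)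
      also have "\<dots> = card {i. i < length (take k l) \<and> x = take k l ! i}"
        by (rule length_filter_conv_card)
      also have "{i. i < length (take k l) \<and> x = take k l ! i} = S"
        unfolding S_def using kl by auto
      finally show ?thesis .
    qed
    with cp have cS: "p \<le> card S" by simp
    have fS: "finite S" unfolding S_def by auto
    have neS: "S \<noteq> {}" using cS pp by auto
    define a where "a = Min S"
    define b where "b = Max S"
    have aS: "a \<in> S" and bS: "b \<in> S" unfolding a_def b_def using fS neS by auto
    have sub: "S \<subseteq> {a..b}" unfolding a_def b_def using fS by auto
    have "card S \<le> card {a..b}" using sub card_mono[of "{a..b}" S] by simp
    moreover have "a \<le> b" using sub aS by auto
    ultimately have ab: "a + p \<le> b + 1" using cS card_atLeastAtMost[of a b] by linarith
    have allx: "l ! i = x" if "a \<le> i" "i \<le> b" for i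
    proof -
      have bk: "b < length l" using bS kl unfolding S_def by auto
      have "l ! i \<le> l ! a"
        using that bk srt by (cases "a = i") (auto simp: sorted_wrt_iff_nth_less)
      moreover have "l ! b \<le> l ! i"
        using that bk srt by (cases "b = i") (auto simp: sorted_wrt_iff_nth_less)
      ultimately show ?thesis using aS bS unfolding S_def by auto
    qed
    obtain r where r: "r < p" "int p dvd 2 * int x - 2 * int (a + r + 1) + 1"
      using arith_choice[OF assms(2) pp] by blast
    define j where "j = a + r + 1"
    have jb: "j \<le> b + 1" using r ab unfolding j_def by simp
    have bk: "b < k" using bS unfolding S_def by auto
    have pj: "part l j = x"
      unfolding part_def j_def using allx[of "a + r"] jb bk kl unfolding j_def by auto
    have "hook l j j = 2 * int x - 2 * int j + 1"
      unfolding hook_def sc pj by simp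
    then have "int p dvd hook l j j" using r unfolding j_def by simp
    moreover have "1 \<le> j" "j \<le> kpart l" using jb bk unfolding j_def k_def by auto
    ultimately show False using nd by blast
  qed
qed

end
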